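(* Let $r=\frac{1}{2\pi}$ and let $F$ be the regular $500$-gon with vertices $\bigl(r\cos\frac{k\pi}{250}, r\sin\frac{k\pi}{250}\bigr)$, $k=0,\dots,499$. For $z=(x_1,y_1,x_2,y_2,\theta)\in\mathbb{R}^5$ let $R(z)$ be the closed rectangle with sides parallel to the coordinate axes, center $(x_1,y_1)$, horizontal side length $0.4625$ and vertical side length $0.0375$, and let $T(z)$ be the closed equilateral triangle with vertices $\bigl(x_2+\frac{\sqrt3}{9}\cos(\theta+\frac{2\pi j}{3}),\, y_2+\frac{\sqrt3}{9}\sin(\theta+\frac{2\pi j}{3})\bigr)$, $j=0,1,2$ (side length $\frac13$). Let $f(z)$ be the area of the convex hull of $F\cup R(z)\cup T(z)$. Then $f$ is a convex function of each of the coordinates $x_1$, $y_1$, $x_2$, $y_2$ separately (with the other four coordinates fixed). *)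

theory Defs
  imports "HOL-Analysis.Analysis"
begin

definition rad :: real where "rad = 1 / (2 * pi)"

definition polygonF :: "(real \<times> real) set" where
  "polygonF = convex hull {(rad * cos (real k * pi / 250), rad * sin (real k * pi / 250)) | k::nat. k < 500}"

definition rectR :: "real \<Rightarrow> real \<Rightarrow> (real \<times> real) set" where
  "rectR x1 y1 = {x1 - 0.4625 / 2 .. x1 + 0.4625 / 2} \<times> {y1 - 0.0375 / 2 .. y1 + 0.0375 / 2}"

definition triT :: "real \<Rightarrow> real \<Rightarrow> real \<Rightarrow> (real \<times> real) set" where
  "triT x2 y2 \<theta> = convex hull
     {(x2 + sqrt 3 / 9 * cos (\<theta> + 2 * pi * real j / 3),
       y2 + sqrt 3 / 9 * sin (\<theta> + 2 * pi * real j / 3)) | j::nat. j < 3}"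

definition areaf :: "real \<Rightarrow> real \<Rightarrow> real \<Rightarrow> real \<Rightarrow> real \<Rightarrow> real" where
  "areaf x1 y1 x2 y2 \<theta> =
     measure lebesgue (convex hull (polygonF \<union> rectR x1 y1 \<union> triT x2 y2 \<theta>))"

end

theory Submission
  imports Defs
begin

lemma sec_len:
  fixes S :: "real set"
  assumes "compact S" "connected S" "S \<noteq> {}"
  shows "S = {Inf S .. Sup S}" "emeasure lborel S = ennreal (Sup S - Inf S)" "Inf S \<le> Sup S"
proof -
  obtain a b where ab: "S = {a..b}" using assms connected_compact_interval_1 by blast
  with assms have "a \<le> b" by auto
  with ab show "S = {Inf S .. Sup S}" "emeasure lborel S = ennreal (Sup S - Inf S)" "Inf S \<le> Sup S" by auto
qed

lemma sec_convex:
  fixes E :: "(real \<times> real) set" and a b \<mu> :: real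
  defines "S \<equiv> \<lambda>t. (\<lambda>(y,s). y + s*t) ` E"
  assumes comp: "\<And>t. compact (S t)" and conn: "\<And>t. connected (S t)" and mu: "0 < \<mu>" "\<mu> < 1"
  shows "emeasure lborel (S ((1-\<mu>)*a + \<mu>*b)) \<le> ennreal (1-\<mu>) * emeasure lborel (S a) + ennreal \<mu> * emeasure lborel (S b)"
proof (cases "E = {}")
  case True
  then show ?thesis by (simp add: S_def)
next
  case False
  then have ne: "\<And>t. S t \<noteq> {}" by (simp add: S_def)
  note L = sec_len[OF comp conn ne]
  have ba: "\<And>t. bdd_above (S t)"
    by (meson comp bounded_imp_bdd_above compact_imp_bounded)
  have bb: "\<And>t. bdd_below (S t)"
    by (meson comp bounded_imp_bdd_below compact_imp_bounded)
  let ?m = "(1-\<mu>)*a + \<mu>*b"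
  have hi: "Sup (S ?m) \<le> (1-\<mu>) * Sup (S a) + \<mu> * Sup (S b)"
  proof (rule cSup_least[OF ne])
    fix z assume "z \<in> S ?m"
    then obtain y s where ys: "(y,s) \<in> E" "z = y + s * ?m" by (auto simp: S_def)
    have "y + s*a \<in> S a" "y + s*b \<in> S b" using ys by (auto simp: S_def image_iff intro!: bexI[of _ "(y,s)"])
    then have "y + s*a \<le> Sup (S a)" "y + s*b \<le> Sup (S b)" using ba by (auto intro: cSup_upper)
    then have "(1-\<mu>)*(y + s*a) + \<mu>*(y+s*b) \<le> (1-\<mu>) * Sup (S a) + \<mu> * Sup (S b)"
      using mu by (intro add_mono mult_left_mono) auto
    moreover have "z = (1-\<mu>)*(y + s*a) + \<mu>*(y+s*b)" using ys by (simp add: algebra_simps)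
    ultimately show "z \<le> (1-\<mu>) * Sup (S a) + \<mu> * Sup (S b)" by simp
  qed
  have lo: "(1-\<mu>) * Inf (S a) + \<mu> * Inf (S b) \<le> Inf (S ?m)"
  proof (rule cInf_greatest[OF ne])
    fix z assume "z \<in> S ?m"
    then obtain y s where ys: "(y,s) \<in> E" "z = y + s * ?m" by (auto simp: S_def)
    have "y + s*a \<in> S a" "y + s*b \<in> S b" using ys by (auto simp: S_def image_iff intro!: bexI[of _ "(y,s)"])
    then have "Inf (S a) \<le> y + s*a" "Inf (S b) \<le> y + s*b" using bb by (auto intro: cInf_lower)
    then have "(1-\<mu>) * Inf (S a) + \<mu> * Inf (S b) \<le> (1-\<mu>)*(y + s*a) + \<mu>*(y+s*b)"
      using mu by (intro add_mono mult_left_mono) auto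
    moreover have "z = (1-\<mu>)*(y + s*a) + \<mu>*(y+s*b)" using ys by (simp add: algebra_simps)
    ultimately show "(1-\<mu>) * Inf (S a) + \<mu> * Inf (S b) \<le> z" by simp
  qed
  have "emeasure lborel (S ?m) = ennreal (Sup (S ?m) - Inf (S ?m))" using L by blast
  also have "\<dots> \<le> ennreal ((1-\<mu>) * (Sup (S a) - Inf (S a)) + \<mu> * (Sup (S b) - Inf (S b)))"
    using hi lo by (intro ennreal_leI) (simp add: algebra_simps)
  also have "\<dots> = ennreal (1-\<mu>) * ennreal (Sup (S a) - Inf (S a)) + ennreal \<mu> * ennreal (Sup (S b) - Inf (S b))"
    using mu L(3)[of a] L(3)[of b] by (simp add: ennreal_plus ennreal_mult)
  also have "\<dots> = ennreal (1-\<mu>) * emeasure lborel (S a) + ennreal \<mu> * emeasure lborel (S b)"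
    using L by simp
  finally show ?thesis .
qed


lemma core:
  fixes A B :: "(real \<times> real) set"
  assumes A: "compact A" "A \<noteq> {}" and B: "compact B" "B \<noteq> {}"
  shows "convex_on UNIV (\<lambda>t. measure lebesgue (convex hull (A \<union> (\<lambda>p. p + (0,t)) ` B)))"
proof -
  define g where "g t p = p + (0::real, t::real)" for t p
  define C where "C t = convex hull (A \<union> g t ` B)" for t
  define HA where "HA = convex hull A"
  define HB where "HB = convex hull B"
  have gcont: "continuous_on UNIV (g t)" for t unfolding g_def by (intro continuous_intros)
  have Ccomp: "compact (C t)" for t
    unfolding C_def
    by (intro compact_convex_hull compact_Un A B compact_continuous_image continuous_on_subset[OF gcont]) auto
  have gHB: "convex hull (g t ` B) = g t ` HB" for t
  proof -
    have "g t ` B = (\<lambda>x. (0,t) + x) ` B" by (auto simp: g_def add.commute)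
    moreover have "g t ` HB = (\<lambda>x. (0,t) + x) ` HB" by (auto simp: g_def add.commute)
    ultimately show ?thesis by (simp add: convex_hull_translation HB_def)
  qed
  have Ceq: "C t = {u *\<^sub>R a + v *\<^sub>R q | u v a q. u \<ge> 0 \<and> v \<ge> 0 \<and> u + v = 1 \<and> a \<in> HA \<and> q \<in> g t ` HB}" for t
  proof -
    have "C t = convex hull (HA \<union> g t ` HB)"
      unfolding C_def HA_def gHB[symmetric] by (metis hull_Un_left hull_Un_right)
    also have "\<dots> = {u *\<^sub>R a + v *\<^sub>R q | u v a q. u \<ge> 0 \<and> v \<ge> 0 \<and> u + v = 1 \<and> a \<in> HA \<and> q \<in> g t ` HB}"
    proof (rule convex_hull_union_two)
      show "convex HA" "HA \<noteq> {}" using A by (auto simp: HA_def)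
      show "convex (g t ` HB)" by (metis gHB convex_convex_hull)
      show "g t ` HB \<noteq> {}" using B by (auto simp: HB_def)
    qed
    finally show ?thesis .
  qed
  define E where "E x = {(snd ((1-v) *\<^sub>R a + v *\<^sub>R q), v) | a q v. a \<in> HA \<and> q \<in> HB \<and> 0 \<le> v \<and> v \<le> 1 \<and> fst ((1-v) *\<^sub>R a + v *\<^sub>R q) = x}" for x
  have sec: "Pair x -` C t = (\<lambda>(y,s). y + s*t) ` E x" for x t
  proof (intro equalityI subsetI)
    fix y assume "y \<in> Pair x -` C t"
    then have "(x,y) \<in> C t" by simp
    then obtain u v a q' where h0: "(x,y) = u *\<^sub>R a + v *\<^sub>R q'" "u\<ge>0" "v\<ge>0" "u+v=1" "a\<in>HA" "q' \<in> g t ` HB"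
      unfolding Ceq by blast
    then obtain q where "q\<in>HB" "q' = g t q" by blast
    with h0 have h: "(x,y) = u *\<^sub>R a + v *\<^sub>R g t q" "u\<ge>0" "v\<ge>0" "u+v=1" "a\<in>HA" "q\<in>HB"
      by auto
    have u: "u = 1 - v" using h by simp
    have fx: "fst ((1-v) *\<^sub>R a + v *\<^sub>R q) = x" and fy: "y = snd ((1-v) *\<^sub>R a + v *\<^sub>R q) + v * t"
      using arg_cong[OF h(1), of fst] arg_cong[OF h(1), of snd] u by (auto simp: g_def algebra_simps)
    have "(snd ((1-v) *\<^sub>R a + v *\<^sub>R q), v) \<in> E x"
      using h fx u unfolding E_def mem_Collect_eq by (intro exI[of _ a] exI[of _ q] exI[of _ v]) auto
    then show "y \<in> (\<lambda>(y,s). y + s*t) ` E x" using fy by (force intro: rev_image_eqI)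
  next
    fix y assume "y \<in> (\<lambda>(y,s). y + s*t) ` E x"
    then obtain a q v where h: "a \<in> HA" "q \<in> HB" "0 \<le> v" "v \<le> 1" "fst ((1-v) *\<^sub>R a + v *\<^sub>R q) = x"
      "y = snd ((1-v) *\<^sub>R a + v *\<^sub>R q) + v * t"
      unfolding E_def by auto
    have "(x,y) = (1-v) *\<^sub>R a + v *\<^sub>R g t q"
      using h by (auto simp: g_def prod_eq_iff algebra_simps)
    moreover have "g t q \<in> g t ` HB" using h by auto
    ultimately have "(x,y) \<in> C t" unfolding Ceq using h
      by (smt (verit) mem_Collect_eq)
    then show "y \<in> Pair x -` C t" by simp
  qed
  have Cconv: "convex (C t)" for t unfolding C_def by simp
  have secset: "Pair x -` K = snd ` (K \<inter> ({x} \<times> UNIV))" for x and K :: "(real \<times> real) set"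
    by force
  have seccomp: "compact (Pair x -` C t)" for x t
    unfolding secset
    by (intro compact_continuous_image continuous_intros compact_Int_closed Ccomp closed_Times)
  have secconv: "convex (Pair x -` C t)" for x t
    unfolding secset
    by (intro convex_linear_image convex_Int Cconv convex_Times) (auto simp: linear_snd)
  have Csets: "C t \<in> sets (lborel \<Otimes>\<^sub>M lborel)" for t
    by (subst lborel_prod) (simp add: borel_closed compact_imp_closed Ccomp)
  have Fub: "emeasure lborel (C t) = (\<integral>\<^sup>+x. emeasure lborel (Pair x -` C t) \<partial>lborel)" for t
    using lborel.emeasure_pair_measure_alt[OF Csets[of t]] by (simp add: lborel_prod)
  have meas: "(\<lambda>x. emeasure lborel (Pair x -` C t)) \<in> borel_measurable lborel" for t
    using lborel.measurable_emeasure_Pair[OF Csets[of t]] by simp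
  have fin: "emeasure lborel (C t) = ennreal (measure lebesgue (C t))" for t
  proof -
    have "C t \<in> sets lborel" by (simp add: borel_closed compact_imp_closed Ccomp)
    then have "measure lebesgue (C t) = measure lborel (C t)" by simp
    moreover have "emeasure lborel (C t) \<noteq> \<infinity>"
      using emeasure_bounded_finite[OF compact_imp_bounded[OF Ccomp]] by (simp add: less_top)
    ultimately show ?thesis by (simp add: emeasure_eq_ennreal_measure)
  qed
  have cvx: "measure lebesgue (C ((1-\<mu>)*a + \<mu>*b)) \<le> (1-\<mu>) * measure lebesgue (C a) + \<mu> * measure lebesgue (C b)"
    if mu: "0 < \<mu>" "\<mu> < 1" for \<mu> a b
  proof -
    have pt: "emeasure lborel (Pair x -` C ((1-\<mu>)*a + \<mu>*b)) \<le>
       ennreal (1-\<mu>) * emeasure lborel (Pair x -` C a) + ennreal \<mu> * emeasure lborel (Pair x -` C b)" for x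
      unfolding sec
      by (rule sec_convex[OF _ _ mu]) (auto simp: sec[symmetric] seccomp secconv convex_connected)
    have "ennreal (measure lebesgue (C ((1-\<mu>)*a + \<mu>*b))) = (\<integral>\<^sup>+x. emeasure lborel (Pair x -` C ((1-\<mu>)*a + \<mu>*b)) \<partial>lborel)"
      using Fub fin by metis
    also have "\<dots> \<le> (\<integral>\<^sup>+x. (ennreal (1-\<mu>) * emeasure lborel (Pair x -` C a) + ennreal \<mu> * emeasure lborel (Pair x -` C b)) \<partial>lborel)"
      by (intro nn_integral_mono pt)
    also have "\<dots> = ennreal (1-\<mu>) * (\<integral>\<^sup>+x. emeasure lborel (Pair x -` C a) \<partial>lborel) + ennreal \<mu> * (\<integral>\<^sup>+x. emeasure lborel (Pair x -` C b) \<partial>lborel)"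
      using meas by (simp add: nn_integral_add nn_integral_cmult)
    also have "\<dots> = ennreal (1-\<mu>) * ennreal (measure lebesgue (C a)) + ennreal \<mu> * ennreal (measure lebesgue (C b))"
      using Fub fin by metis
    also have "\<dots> = ennreal ((1-\<mu>) * measure lebesgue (C a) + \<mu> * measure lebesgue (C b))"
      using mu by (simp add: ennreal_plus ennreal_mult)
    finally show ?thesis
      using mu by (subst (asm) ennreal_le_iff) auto
  qed
  show ?thesis
  proof (rule convex_onI)
    fix \<mu> x y :: real assume "0 < \<mu>" "\<mu> < 1"
    then show "measure lebesgue (convex hull (A \<union> (\<lambda>p. p + (0,(1 - \<mu>) *\<^sub>R x + \<mu> *\<^sub>R y)) ` B))
       \<le> (1 - \<mu>) * measure lebesgue (convex hull (A \<union> (\<lambda>p. p + (0,x)) ` B)) + \<mu> * measure lebesgue (convex hull (A \<union> (\<lambda>p. p + (0,y)) ` B))"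
      using cvx[of \<mu> x y] by (simp add: C_def g_def)
  qed auto
qed


lemma swap_measure:
  fixes S :: "(real \<times> real) set"
  assumes "compact S"
  shows "measure lebesgue (prod.swap ` S) = measure lebesgue S"
proof -
  have cs: "compact (prod.swap ` S)"
    by (intro compact_continuous_image continuous_intros assms)
  have S1: "S \<in> sets lborel" and S2: "prod.swap ` S \<in> sets lborel"
    using assms cs by (auto simp: borel_closed compact_imp_closed)
  have "measure lborel (prod.swap ` S) = measure (lborel \<Otimes>\<^sub>M lborel) (prod.swap ` S)"
    by (simp add: lborel_prod)
  also have "\<dots> = measure (distr (lborel \<Otimes>\<^sub>M lborel) (lborel \<Otimes>\<^sub>M lborel) (\<lambda>(x, y). (y, x))) (prod.swap ` S)"
    by (subst lborel_pair.distr_pair_swap) simp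
  also have "\<dots> = measure (lborel \<Otimes>\<^sub>M lborel) ((\<lambda>(x, y). (y, x)) -` (prod.swap ` S) \<inter> space (lborel \<Otimes>\<^sub>M lborel))"
  proof (rule measure_distr)
    show "prod.swap ` S \<in> sets (lborel \<Otimes>\<^sub>M lborel)" by (subst lborel_prod) (rule S2)
  qed (rule measurable_pair_swap')
  also have "(\<lambda>(x, y). (y, x)) -` (prod.swap ` S) \<inter> space (lborel \<Otimes>\<^sub>M lborel) = S"
    by (force simp: space_pair_measure)
  also have "measure (lborel \<Otimes>\<^sub>M lborel) S = measure lborel S" by (simp add: lborel_prod)
  finally show ?thesis using S1 S2 by simp
qed

lemma core_x:
  fixes A B :: "(real \<times> real) set"
  assumes A: "compact A" "A \<noteq> {}" and B: "compact B" "B \<noteq> {}"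
  shows "convex_on UNIV (\<lambda>t. measure lebesgue (convex hull (A \<union> (\<lambda>p. p + (t,0)) ` B)))"
proof -
  have lin: "linear (prod.swap :: real \<times> real \<Rightarrow> _)"
    by (auto simp: linear_iff)
  have eq: "measure lebesgue (convex hull (A \<union> (\<lambda>p. p + (t,0)) ` B)) =
     measure lebesgue (convex hull (prod.swap ` A \<union> (\<lambda>p. p + (0,t)) ` (prod.swap ` B)))" for t
  proof -
    have c: "compact (convex hull (A \<union> (\<lambda>p. p + (t,0)) ` B))"
      by (intro compact_convex_hull compact_Un A B compact_continuous_image continuous_intros)
    have "prod.swap ` (convex hull (A \<union> (\<lambda>p. p + (t,0)) ` B)) = convex hull (prod.swap ` (A \<union> (\<lambda>p. p + (t,0)) ` B))"
      by (rule convex_hull_linear_image[OF lin])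
    also have "prod.swap ` (A \<union> (\<lambda>p. p + (t,0)) ` B) = prod.swap ` A \<union> (\<lambda>p. p + (0,t)) ` (prod.swap ` B)"
    proof -
      have e: "(\<lambda>p. prod.swap (p + (t,0))) = (\<lambda>p. prod.swap p + (0,t))" by (rule ext) auto
      show ?thesis by (simp only: image_Un image_image e)
    qed
    finally show ?thesis using swap_measure[OF c] by simp
  qed
  show ?thesis
    unfolding eq
    by (rule core) (use A B in \<open>auto intro: compact_continuous_image continuous_intros\<close>)
qed


lemma transl_image: "(\<lambda>p. p + c) ` S = {p. p - c \<in> S}" for c :: "real \<times> real"
  by (auto simp: image_iff) (metis diff_add_cancel)

lemma rect_tr: "rectR (x+a) (y+b) = (\<lambda>p. p + (a,b)) ` rectR x y"
  unfolding transl_image by (auto simp: rectR_def)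

lemma tri_tr: "triT (x+a) (y+b) \<theta> = (\<lambda>p. p + (a,b)) ` triT x y \<theta>"
proof -
  let ?V = "\<lambda>x y. {(x + sqrt 3 / 9 * cos (\<theta> + 2 * pi * real j / 3),
       y + sqrt 3 / 9 * sin (\<theta> + 2 * pi * real j / 3)) | j::nat. j < 3}"
  have "?V (x+a) (y+b) = (\<lambda>p. (a,b) + p) ` ?V x y"
    by (auto simp: image_iff algebra_simps)
  moreover have "(\<lambda>p. p + (a,b)) = (\<lambda>p. (a,b) + p)" by (rule ext) (simp add: add.commute)
  ultimately show ?thesis unfolding triT_def by (simp only: convex_hull_translation)
qed

lemma compact_F: "compact polygonF" and ne_F: "polygonF \<noteq> {}"
proof -
  have fin: "finite {(rad * cos (real k * pi / 250), rad * sin (real k * pi / 250)) | k::nat. k < 500}"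
    by (rule finite_image_set) simp
  show "compact polygonF" unfolding polygonF_def by (rule finite_imp_compact_convex_hull[OF fin])
  show "polygonF \<noteq> {}" unfolding polygonF_def by (auto intro: exI[of _ "0::nat"])
qed

lemma compact_R: "compact (rectR x y)" and ne_R: "rectR x y \<noteq> {}"
  unfolding rectR_def by (auto intro: compact_Times)

lemma compact_T: "compact (triT x y \<theta>)" and ne_T: "triT x y \<theta> \<noteq> {}"
proof -
  have fin: "finite {(x + sqrt 3 / 9 * cos (\<theta> + 2 * pi * real j / 3),
       y + sqrt 3 / 9 * sin (\<theta> + 2 * pi * real j / 3)) | j::nat. j < 3}"
    by (rule finite_image_set) simp
  show "compact (triT x y \<theta>)" unfolding triT_def by (rule finite_imp_compact_convex_hull[OF fin])
  show "triT x y \<theta> \<noteq> {}" unfolding triT_def by (auto intro: exI[of _ "0::nat"])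
qed

theorem corollary1:
  fixes x1 y1 x2 y2 \<theta> :: real
  shows "convex_on UNIV (\<lambda>t. areaf t y1 x2 y2 \<theta>)
       \<and> convex_on UNIV (\<lambda>t. areaf x1 t x2 y2 \<theta>)
       \<and> convex_on UNIV (\<lambda>t. areaf x1 y1 t y2 \<theta>)
       \<and> convex_on UNIV (\<lambda>t. areaf x1 y1 x2 t \<theta>)"
proof (intro conjI)
  have AF: "compact (polygonF \<union> triT x2 y2 \<theta>)" "polygonF \<union> triT x2 y2 \<theta> \<noteq> {}"
    using compact_F compact_T ne_F by auto
  have AR: "compact (polygonF \<union> rectR x1 y1)" "polygonF \<union> rectR x1 y1 \<noteq> {}"
    using compact_F compact_R ne_F by auto
  have e1: "areaf t y1 x2 y2 \<theta> = measure lebesgue (convex hull ((polygonF \<union> triT x2 y2 \<theta>) \<union> (\<lambda>p. p + (t,0)) ` rectR 0 y1))" for t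
    using rect_tr[of 0 t y1 0] unfolding areaf_def by (simp add: Un_ac)
  show "convex_on UNIV (\<lambda>t. areaf t y1 x2 y2 \<theta>)"
    unfolding e1 by (rule core_x[OF AF compact_R ne_R])
  have e2: "areaf x1 t x2 y2 \<theta> = measure lebesgue (convex hull ((polygonF \<union> triT x2 y2 \<theta>) \<union> (\<lambda>p. p + (0,t)) ` rectR x1 0))" for t
    using rect_tr[of x1 0 0 t] unfolding areaf_def by (simp add: Un_ac)
  show "convex_on UNIV (\<lambda>t. areaf x1 t x2 y2 \<theta>)"
    unfolding e2 by (rule core[OF AF compact_R ne_R])
  have e3: "areaf x1 y1 t y2 \<theta> = measure lebesgue (convex hull ((polygonF \<union> rectR x1 y1) \<union> (\<lambda>p. p + (t,0)) ` triT 0 y2 \<theta>))" for t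
    using tri_tr[of 0 t y2 0 \<theta>] unfolding areaf_def by (simp add: Un_ac)
  show "convex_on UNIV (\<lambda>t. areaf x1 y1 t y2 \<theta>)"
    unfolding e3 by (rule core_x[OF AR compact_T ne_T])
  have e4: "areaf x1 y1 x2 t \<theta> = measure lebesgue (convex hull ((polygonF \<union> rectR x1 y1) \<union> (\<lambda>p. p + (0,t)) ` triT x2 0 \<theta>))" for t
    using tri_tr[of x2 0 0 t \<theta>] unfolding areaf_def by (simp add: Un_ac)
  show "convex_on UNIV (\<lambda>t. areaf x1 y1 x2 t \<theta>)"
    unfolding e4 by (rule core[OF AR compact_T ne_T])
qed

end
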